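(* Fix a target task and the data below. For a source task $(\mu,f)\in\mathcal{P}(\mathcal{X}_S)\times A_S$ define its transfer risk $$\mathcal{C}(\mu,f):=\inf_{T_0^X\in\mathbb{T}_0^X,\;T_0^Y\in\mathbb{T}_0^Y} C\Big(\mathcal{E}^O\big(T_0^Y(\cdot,f(T_0^X(\cdot)))\big),\;D\big(T_0^X\#\mathrm{Law}(X_T),\mu\big)\Big).$$ Then for every fixed $f\in A_S$, the map $\mu\mapsto\mathcal{C}(\mu,f)$ is continuous on the metric space $(\mathcal{P}(\mathcal{X}_S),D)$.
   Context: $(\mathcal{X}_T,\|\cdot\|_{\mathcal{X}_T})$, $(\mathcal{Y}_T,\|\cdot\|_{\mathcal{Y}_T})$, $(\mathcal{X}_S,\|\cdot\|_{\mathcal{X}_S})$, $(\mathcal{Y}_S,\|\cdot\|_{\mathcal{Y}_S})$ are Banach spaces (target/source input and output spaces); $X_T$ is an $\mathcal{X}_T$-valued random variable (target input). $A_S$ is a set of functions $\mathcal{X}_S\to\mathcal{Y}_S$ (admissible pretrained source models) and $A_T$ a set of functions $\mathcal{X}_T\to\mathcal{Y}_T$. $\mathbb{T}_0^X$ is a nonempty set of maps $\mathcal{X}_T\to\mathcal{X}_S$ (initial input transports) and $\mathbb{T}_0^Y$ a nonempty set of maps $\mathcal{X}_T\times\mathcal{Y}_S\to\mathcal{Y}_T$ (initial output transports) such that every intermediate model $x\mapsto T_0^Y(x,f(T_0^X(x)))$ with $f\in A_S$ lies in $A_T$. $\mathcal{E}^O:A_T\to[0,\infty)$ is an output transport risk.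 $D$ is a metric on the set $\mathcal{P}(\mathcal{X}_S)$ of probability measures on $\mathcal{X}_S$; the input transport risk of $T_0^X$ for source input law $\mu$ is $D(T_0^X\#\mathrm{Law}(X_T),\mu)$, where $\#$ denotes pushforward. $C:\mathbb{R}\times\mathbb{R}\to\mathbb{R}$ satisfies $C(0,0)=0$, is non-decreasing in each argument when the other is fixed, and there is $L>0$ with $|C(a,b)-C(a',b')|\le L(|a-a'|+|b-b'|)$ for all $a,a',b,b'\ge 0$. *)

theory Defs
  imports "HOL-Probability.Probability"
begin

definition prob_measures :: "'a::topological_space measure set" where
  "prob_measures = {\<mu>. prob_space \<mu> \<and> sets \<mu> = sets (borel :: 'a measure)}"

definition transfer_risk ::
  "(real \<Rightarrow> real \<Rightarrow> real) \<Rightarrow> (('xt \<Rightarrow> 'yt) \<Rightarrow> real) \<Rightarrow>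
   ('xs::topological_space measure \<Rightarrow> 'xs measure \<Rightarrow> real) \<Rightarrow>
   ('xt \<Rightarrow> 'xs) set \<Rightarrow> ('xt \<Rightarrow> 'ys \<Rightarrow> 'yt) set \<Rightarrow> 'xt measure \<Rightarrow>
   'xs measure \<Rightarrow> ('xs \<Rightarrow> 'ys) \<Rightarrow> real" where
  "transfer_risk C EO D TX TY LawXT \<mu> f =
     Inf {C (EO (\<lambda>x. T0Y x (f (T0X x)))) (D (distr LawXT borel T0X) \<mu>) | T0X T0Y.
            T0X \<in> TX \<and> T0Y \<in> TY}"

end

theory Submission
  imports Defs
begin

theorem proposition6:
  fixes M :: "'w measure"
    and XT :: "'w \<Rightarrow> 'xt::banach"
    and AS :: "('xs::banach \<Rightarrow> 'ys::banach) set"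
    and AT :: "('xt \<Rightarrow> 'yt::banach) set"
    and TX :: "('xt \<Rightarrow> 'xs) set"
    and TY :: "('xt \<Rightarrow> 'ys \<Rightarrow> 'yt) set"
    and EO :: "('xt \<Rightarrow> 'yt) \<Rightarrow> real"
    and D :: "'xs measure \<Rightarrow> 'xs measure \<Rightarrow> real"
    and C :: "real \<Rightarrow> real \<Rightarrow> real"
    and L :: real
    and f :: "'xs \<Rightarrow> 'ys"
  assumes M: "prob_space M"
    and XT: "XT \<in> borel_measurable M"
    and TX_ne: "TX \<noteq> {}" and TY_ne: "TY \<noteq> {}"
    and TX_meas: "\<And>T. T \<in> TX \<Longrightarrow> T \<in> borel_measurable borel"
    and inter: "\<And>T0X T0Y g. T0X \<in> TX \<Longrightarrow> T0Y \<in> TY \<Longrightarrow> g \<in> AS \<Longrightarrow>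
                 (\<lambda>x. T0Y x (g (T0X x))) \<in> AT"
    and EO_nonneg: "\<And>g. g \<in> AT \<Longrightarrow> EO g \<ge> 0"
    and D_metric: "Metric_space prob_measures D"
    and C00: "C 0 0 = 0"
    and C_mono1: "\<And>a a' b. a \<le> a' \<Longrightarrow> C a b \<le> C a' b"
    and C_mono2: "\<And>a b b'. b \<le> b' \<Longrightarrow> C a b \<le> C a b'"
    and L_pos: "L > 0"
    and C_lip: "\<And>a a' b b'. a \<ge> 0 \<Longrightarrow> a' \<ge> 0 \<Longrightarrow> b \<ge> 0 \<Longrightarrow> b' \<ge> 0 \<Longrightarrow>
                 \<bar>C a b - C a' b'\<bar> \<le> L * (\<bar>a - a'\<bar> + \<bar>b - b'\<bar>)"
    and f: "f \<in> AS"
  shows "continuous_map (Metric_space.mtopology prob_measures D) euclideanreal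
           (\<lambda>\<mu>. transfer_risk C EO D TX TY (distr M borel XT) \<mu> f)"
proof -
  interpret Met: Metric_space prob_measures D by (rule D_metric)
  define N where "N = distr M borel XT"
  define S where "S = (\<lambda>\<mu>. {C (EO (\<lambda>x. T0Y x (f (T0X x)))) (D (distr N borel T0X) \<mu>) | T0X T0Y.
            T0X \<in> TX \<and> T0Y \<in> TY})"
  define F where "F = (\<lambda>\<mu>. transfer_risk C EO D TX TY (distr M borel XT) \<mu> f)"
  have F_eq: "F \<mu> = Inf (S \<mu>)" for \<mu> unfolding F_def S_def N_def transfer_risk_def by simp
  have Cnn: "C a b \<ge> 0" if "a \<ge> 0" "b \<ge> 0" for a b
    using C00 C_mono1[OF that(1), of 0] C_mono2[OF that(2), of a] by linarith
  have Nprob: "prob_space N" unfolding N_def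
    using prob_space.prob_space_distr[OF M XT] by simp
  have nu: "distr N borel T \<in> prob_measures" if "T \<in> TX" for T
  proof -
    have "T \<in> N \<rightarrow>\<^sub>M borel"
      using TX_meas[OF that] measurable_cong_sets[of N borel borel borel] unfolding N_def by simp
    then show ?thesis unfolding prob_measures_def
      using prob_space.prob_space_distr[OF Nprob] by simp
  qed
  have EOnn: "EO (\<lambda>x. T0Y x (f (T0X x))) \<ge> 0" if "T0X \<in> TX" "T0Y \<in> TY" for T0X T0Y
    using EO_nonneg inter[OF that f] by blast
  have Sne: "S \<mu> \<noteq> {}" for \<mu> using TX_ne TY_ne unfolding S_def by blast
  have Sbdd: "bdd_below (S \<mu>)" if "\<mu> \<in> prob_measures" for \<mu>
  proof (rule bdd_belowI[of _ 0])
    fix y assume "y \<in> S \<mu>"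
    then obtain T0X T0Y where "T0X \<in> TX" "T0Y \<in> TY"
      and y: "y = C (EO (\<lambda>x. T0Y x (f (T0X x)))) (D (distr N borel T0X) \<mu>)"
      unfolding S_def by blast
    then show "0 \<le> y" using Cnn EOnn nu that Met.nonneg by metis
  qed
  have key: "F \<mu> \<le> F \<mu>' + L * D \<mu> \<mu>'" if mu: "\<mu> \<in> prob_measures" "\<mu>' \<in> prob_measures" for \<mu> \<mu>'
  proof -
    have "Inf (S \<mu>) - L * D \<mu> \<mu>' \<le> Inf (S \<mu>')"
    proof (rule cInf_greatest[OF Sne])
      fix y assume "y \<in> S \<mu>'"
      then obtain T0X T0Y where T: "T0X \<in> TX" "T0Y \<in> TY"
        and y: "y = C (EO (\<lambda>x. T0Y x (f (T0X x)))) (D (distr N borel T0X) \<mu>')"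
        unfolding S_def by blast
      let ?a = "EO (\<lambda>x. T0Y x (f (T0X x)))"
      let ?\<nu> = "distr N borel T0X"
      have mem: "C ?a (D ?\<nu> \<mu>) \<in> S \<mu>" unfolding S_def using T by blast
      have "Inf (S \<mu>) \<le> C ?a (D ?\<nu> \<mu>)" by (rule cInf_lower[OF mem Sbdd[OF mu(1)]])
      also have "\<dots> \<le> y + L * \<bar>D ?\<nu> \<mu> - D ?\<nu> \<mu>'\<bar>"
        using C_lip[of ?a ?a "D ?\<nu> \<mu>" "D ?\<nu> \<mu>'"] EOnn[OF T] Met.nonneg y by auto
      also have "\<dots> \<le> y + L * D \<mu> \<mu>'"
      proof -
        have "\<bar>D ?\<nu> \<mu> - D ?\<nu> \<mu>'\<bar> \<le> D \<mu> \<mu>'"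
          using Met.triangle[OF nu[OF T(1)] mu(2) mu(1)] Met.triangle[OF nu[OF T(1)] mu(1) mu(2)]
            Met.commute[of \<mu> \<mu>'] by (simp add: abs_le_iff)
        then show ?thesis using L_pos by (simp add: mult_left_mono)
      qed
      finally show "Inf (S \<mu>) - L * D \<mu> \<mu>' \<le> y" by simp
    qed
    then show ?thesis using F_eq by simp
  qed
  have lip: "\<bar>F \<mu> - F \<mu>'\<bar> \<le> L * D \<mu> \<mu>'" if "\<mu> \<in> prob_measures" "\<mu>' \<in> prob_measures" for \<mu> \<mu>'
    using key[OF that] key[OF that(2) that(1)] Met.commute[of \<mu> \<mu>'] by (simp add: abs_le_iff)
  show ?thesis
    unfolding F_def[symmetric] Met.continuous_map_from_metric
  proof (intro conjI ballI allI impI)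
    show "F \<in> prob_measures \<rightarrow> topspace euclideanreal" by simp
    fix a U assume a: "a \<in> prob_measures" and U: "openin euclideanreal U \<and> F a \<in> U"
    then obtain e where e: "e > 0" "ball (F a) e \<subseteq> U"
      by (meson open_contains_ball open_openin)
    show "\<exists>r>0. \<forall>x. x \<in> prob_measures \<and> D a x < r \<longrightarrow> F x \<in> U"
    proof (intro exI[of _ "e / L"] conjI allI impI)
      show "e / L > 0" using e L_pos by simp
      fix x assume x: "x \<in> prob_measures \<and> D a x < e / L"
      have "\<bar>F a - F x\<bar> \<le> L * D a x" using lip a x by blast
      also have "\<dots> < e" using x L_pos by (simp add: field_simps)
      finally show "F x \<in> U" using e by (auto simp: dist_real_def)
    qed
  qed
qed

end
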